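(* Let $\ell:K(H\times\mathrm{Id})\to HM$ be an abstract GSOS rule with $\ell$-interpretation $b:KC\to C$. Then every sandwiched $\ell$-equation $e:X\to MHMX$ has a unique solution in $C$, i.e. there is a unique morphism $e^\dagger:X\to C$ such that $$e^\dagger = b^\sharp\cdot Mc^{-1}\cdot MHb^\sharp\cdot MHMe^\dagger\cdot e.$$
   Context: Let $\mathcal A$ be a category with binary products and coproducts, let $H:\mathcal A\to\mathcal A$ be a functor with a terminal coalgebra $c:C\to HC$ (so $c$ is an isomorphism by Lambek's lemma), and let $K:\mathcal A\to\mathcal A$ be a functor such that every object $X$ has a free $K$-algebra $\varphi_X:KMX\to MX$ with universal morphism $\eta_X:X\to MX$. Then $(M,\eta,\mu)$ is the free monad on $K$, where $\mu_X:MMX\to MX$ is the unique $K$-algebra homomorphism $(MMX,\varphi_{MX})\to(MX,\varphi_X)$ with $\mu_X\cdot\eta_{MX}=\mathrm{id}_{MX}$, and $\kappa=\varphi\cdot K\eta:K\to M$. For a $K$-algebra $a:KA\to A$ let $a^\sharp:MA\to A$ be the unique $K$-algebra homomorphism with $a^\sharp\cdot\eta_A=\mathrm{id}_A$; it is an Eilenberg–Moore algebra for $M$ and $a=a^\sharp\cdot\kappa_A$. An abstract GSOS rule is a natural transformation $\ell:K(H\times\mathrm{Id})\to HM$; its $\ell$-interpretation is the unique morphism $b:KC\to C$ with $c\cdot b=Hb^\sharp\cdot\ell_C\cdot K\langle c,\mathrm{id}_C\rangle$ (it exists and is unique). A sandwiched $\ell$-equation is any morphism $e:X\to MHMX$.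 *)

theory Defs
  imports Main
begin

text \<open>Categories are encoded with a single type of objects 'o and a single type
of morphisms 'm. Composition is written Comp g f for the composite g . f
(first f, then g).\<close>

record ('o, 'm) category =
  Obj  :: "'o set"
  Arr  :: "'m set"
  Dom  :: "'m \<Rightarrow> 'o"
  Cod  :: "'m \<Rightarrow> 'o"
  Comp :: "'m \<Rightarrow> 'm \<Rightarrow> 'm"
  Ide  :: "'o \<Rightarrow> 'm"

definition hom :: "('o, 'm) category \<Rightarrow> 'm \<Rightarrow> 'o \<Rightarrow> 'o \<Rightarrow> bool" where
  "hom \<A> f A B \<longleftrightarrow> f \<in> Arr \<A> \<and> Dom \<A> f = A \<and> Cod \<A> f = B"

definition is_category :: "('o, 'm) category \<Rightarrow> bool" where
  "is_category \<A> \<longleftrightarrow>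
     (\<forall>f \<in> Arr \<A>. Dom \<A> f \<in> Obj \<A> \<and> Cod \<A> f \<in> Obj \<A>) \<and>
     (\<forall>A \<in> Obj \<A>. hom \<A> (Ide \<A> A) A A) \<and>
     (\<forall>f g A B C. hom \<A> f A B \<longrightarrow> hom \<A> g B C \<longrightarrow> hom \<A> (Comp \<A> g f) A C) \<and>
     (\<forall>f g h A B C D. hom \<A> f A B \<longrightarrow> hom \<A> g B C \<longrightarrow> hom \<A> h C D \<longrightarrow>
         Comp \<A> h (Comp \<A> g f) = Comp \<A> (Comp \<A> h g) f) \<and>
     (\<forall>f A B. hom \<A> f A B \<longrightarrow> Comp \<A> f (Ide \<A> A) = f \<and> Comp \<A> (Ide \<A> B) f = f)"

definition is_endofunctor ::
  "('o, 'm) category \<Rightarrow> ('o \<Rightarrow> 'o) \<Rightarrow> ('m \<Rightarrow> 'm) \<Rightarrow> bool" where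
  "is_endofunctor \<A> Fo Fm \<longleftrightarrow>
     (\<forall>A \<in> Obj \<A>. Fo A \<in> Obj \<A> \<and> Fm (Ide \<A> A) = Ide \<A> (Fo A)) \<and>
     (\<forall>f A B. hom \<A> f A B \<longrightarrow> hom \<A> (Fm f) (Fo A) (Fo B)) \<and>
     (\<forall>f g A B C. hom \<A> f A B \<longrightarrow> hom \<A> g B C \<longrightarrow>
         Fm (Comp \<A> g f) = Comp \<A> (Fm g) (Fm f))"

definition is_product ::
  "('o, 'm) category \<Rightarrow> 'o \<Rightarrow> 'o \<Rightarrow> 'o \<Rightarrow> 'm \<Rightarrow> 'm \<Rightarrow> bool" where
  "is_product \<A> A B P p q \<longleftrightarrow>
     P \<in> Obj \<A> \<and> hom \<A> p P A \<and> hom \<A> q P B \<and>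
     (\<forall>Z f g. hom \<A> f Z A \<longrightarrow> hom \<A> g Z B \<longrightarrow>
        (\<exists>!h. hom \<A> h Z P \<and> Comp \<A> p h = f \<and> Comp \<A> q h = g))"

definition has_chosen_products ::
  "('o, 'm) category \<Rightarrow> ('o \<Rightarrow> 'o \<Rightarrow> 'o) \<Rightarrow> ('o \<Rightarrow> 'o \<Rightarrow> 'm) \<Rightarrow> ('o \<Rightarrow> 'o \<Rightarrow> 'm) \<Rightarrow> bool" where
  "has_chosen_products \<A> P p1 p2 \<longleftrightarrow>
     (\<forall>A \<in> Obj \<A>. \<forall>B \<in> Obj \<A>. is_product \<A> A B (P A B) (p1 A B) (p2 A B))"

definition is_coproduct ::
  "('o, 'm) category \<Rightarrow> 'o \<Rightarrow> 'o \<Rightarrow> 'o \<Rightarrow> 'm \<Rightarrow> 'm \<Rightarrow> bool" where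
  "is_coproduct \<A> A B S i j \<longleftrightarrow>
     S \<in> Obj \<A> \<and> hom \<A> i A S \<and> hom \<A> j B S \<and>
     (\<forall>Z f g. hom \<A> f A Z \<longrightarrow> hom \<A> g B Z \<longrightarrow>
        (\<exists>!h. hom \<A> h S Z \<and> Comp \<A> h i = f \<and> Comp \<A> h j = g))"

definition has_binary_coproducts :: "('o, 'm) category \<Rightarrow> bool" where
  "has_binary_coproducts \<A> \<longleftrightarrow>
     (\<forall>A \<in> Obj \<A>. \<forall>B \<in> Obj \<A>. \<exists>S i j. is_coproduct \<A> A B S i j)"

definition pairing ::
  "('o, 'm) category \<Rightarrow> ('o \<Rightarrow> 'o \<Rightarrow> 'o) \<Rightarrow> ('o \<Rightarrow> 'o \<Rightarrow> 'm) \<Rightarrow> ('o \<Rightarrow> 'o \<Rightarrow> 'm)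
     \<Rightarrow> 'm \<Rightarrow> 'm \<Rightarrow> 'm" where
  "pairing \<A> P p1 p2 f g =
     (THE h. hom \<A> h (Dom \<A> f) (P (Cod \<A> f) (Cod \<A> g)) \<and>
             Comp \<A> (p1 (Cod \<A> f) (Cod \<A> g)) h = f \<and>
             Comp \<A> (p2 (Cod \<A> f) (Cod \<A> g)) h = g)"

text \<open>The functor H x Id on morphisms: f : A -> B goes to
  <Hf . pi1, f . pi2> : HA x A -> HB x B.\<close>

definition prodId_mor ::
  "('o, 'm) category \<Rightarrow> ('o \<Rightarrow> 'o \<Rightarrow> 'o) \<Rightarrow> ('o \<Rightarrow> 'o \<Rightarrow> 'm) \<Rightarrow> ('o \<Rightarrow> 'o \<Rightarrow> 'm)
     \<Rightarrow> ('o \<Rightarrow> 'o) \<Rightarrow> ('m \<Rightarrow> 'm) \<Rightarrow> 'm \<Rightarrow> 'm" where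
  "prodId_mor \<A> P p1 p2 Ho Hm f =
     pairing \<A> P p1 p2
       (Comp \<A> (Hm f) (p1 (Ho (Dom \<A> f)) (Dom \<A> f)))
       (Comp \<A> f (p2 (Ho (Dom \<A> f)) (Dom \<A> f)))"

definition is_alg :: "('o, 'm) category \<Rightarrow> ('o \<Rightarrow> 'o) \<Rightarrow> 'o \<Rightarrow> 'm \<Rightarrow> bool" where
  "is_alg \<A> Ko A a \<longleftrightarrow> A \<in> Obj \<A> \<and> hom \<A> a (Ko A) A"

definition is_alg_hom ::
  "('o, 'm) category \<Rightarrow> ('o \<Rightarrow> 'o) \<Rightarrow> ('m \<Rightarrow> 'm) \<Rightarrow> 'o \<Rightarrow> 'm \<Rightarrow> 'o \<Rightarrow> 'm \<Rightarrow> 'm \<Rightarrow> bool" where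
  "is_alg_hom \<A> Ko Km A a B b h \<longleftrightarrow>
     hom \<A> h A B \<and> Comp \<A> h a = Comp \<A> b (Km h)"

definition has_free_algebras ::
  "('o, 'm) category \<Rightarrow> ('o \<Rightarrow> 'o) \<Rightarrow> ('m \<Rightarrow> 'm) \<Rightarrow> ('o \<Rightarrow> 'o) \<Rightarrow> ('o \<Rightarrow> 'm)
     \<Rightarrow> ('o \<Rightarrow> 'm) \<Rightarrow> bool" where
  "has_free_algebras \<A> Ko Km Mo phi eta \<longleftrightarrow>
     (\<forall>X \<in> Obj \<A>. is_alg \<A> Ko (Mo X) (phi X) \<and> hom \<A> (eta X) X (Mo X) \<and>
        (\<forall>A a f. is_alg \<A> Ko A a \<longrightarrow> hom \<A> f X A \<longrightarrow>
           (\<exists>!h. is_alg_hom \<A> Ko Km (Mo X) (phi X) A a h \<and> Comp \<A> h (eta X) = f)))"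

definition M_mor ::
  "('o, 'm) category \<Rightarrow> ('o \<Rightarrow> 'o) \<Rightarrow> ('m \<Rightarrow> 'm) \<Rightarrow> ('o \<Rightarrow> 'o) \<Rightarrow> ('o \<Rightarrow> 'm)
     \<Rightarrow> ('o \<Rightarrow> 'm) \<Rightarrow> 'm \<Rightarrow> 'm" where
  "M_mor \<A> Ko Km Mo phi eta f =
     (THE h. is_alg_hom \<A> Ko Km (Mo (Dom \<A> f)) (phi (Dom \<A> f)) (Mo (Cod \<A> f)) (phi (Cod \<A> f)) h
             \<and> Comp \<A> h (eta (Dom \<A> f)) = Comp \<A> (eta (Cod \<A> f)) f)"

definition sharp ::
  "('o, 'm) category \<Rightarrow> ('o \<Rightarrow> 'o) \<Rightarrow> ('m \<Rightarrow> 'm) \<Rightarrow> ('o \<Rightarrow> 'o) \<Rightarrow> ('o \<Rightarrow> 'm)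
     \<Rightarrow> ('o \<Rightarrow> 'm) \<Rightarrow> 'o \<Rightarrow> 'm \<Rightarrow> 'm" where
  "sharp \<A> Ko Km Mo phi eta A a =
     (THE h. is_alg_hom \<A> Ko Km (Mo A) (phi A) A a h \<and> Comp \<A> h (eta A) = Ide \<A> A)"

definition is_terminal_coalg ::
  "('o, 'm) category \<Rightarrow> ('o \<Rightarrow> 'o) \<Rightarrow> ('m \<Rightarrow> 'm) \<Rightarrow> 'o \<Rightarrow> 'm \<Rightarrow> bool" where
  "is_terminal_coalg \<A> Ho Hm C c \<longleftrightarrow>
     C \<in> Obj \<A> \<and> hom \<A> c C (Ho C) \<and>
     (\<forall>A a. A \<in> Obj \<A> \<longrightarrow> hom \<A> a A (Ho A) \<longrightarrow>
        (\<exists>!h. hom \<A> h A C \<and> Comp \<A> c h = Comp \<A> (Hm h) a))"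

definition inverse_mor :: "('o, 'm) category \<Rightarrow> 'm \<Rightarrow> 'm" where
  "inverse_mor \<A> f =
     (THE g. hom \<A> g (Cod \<A> f) (Dom \<A> f) \<and> Comp \<A> g f = Ide \<A> (Dom \<A> f)
             \<and> Comp \<A> f g = Ide \<A> (Cod \<A> f))"

definition is_gsos_rule ::
  "('o, 'm) category \<Rightarrow> ('o \<Rightarrow> 'o \<Rightarrow> 'o) \<Rightarrow> ('o \<Rightarrow> 'o \<Rightarrow> 'm) \<Rightarrow> ('o \<Rightarrow> 'o \<Rightarrow> 'm)
     \<Rightarrow> ('o \<Rightarrow> 'o) \<Rightarrow> ('m \<Rightarrow> 'm) \<Rightarrow> ('o \<Rightarrow> 'o) \<Rightarrow> ('m \<Rightarrow> 'm) \<Rightarrow> ('o \<Rightarrow> 'o) \<Rightarrow> ('o \<Rightarrow> 'm)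
     \<Rightarrow> ('o \<Rightarrow> 'm) \<Rightarrow> ('o \<Rightarrow> 'm) \<Rightarrow> bool" where
  "is_gsos_rule \<A> P p1 p2 Ho Hm Ko Km Mo phi eta l \<longleftrightarrow>
     (\<forall>X \<in> Obj \<A>. hom \<A> (l X) (Ko (P (Ho X) X)) (Ho (Mo X))) \<and>
     (\<forall>f X Y. hom \<A> f X Y \<longrightarrow>
        Comp \<A> (l Y) (Km (prodId_mor \<A> P p1 p2 Ho Hm f))
        = Comp \<A> (Hm (M_mor \<A> Ko Km Mo phi eta f)) (l X))"

definition is_interpretation ::
  "('o, 'm) category \<Rightarrow> ('o \<Rightarrow> 'o \<Rightarrow> 'o) \<Rightarrow> ('o \<Rightarrow> 'o \<Rightarrow> 'm) \<Rightarrow> ('o \<Rightarrow> 'o \<Rightarrow> 'm)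
     \<Rightarrow> ('o \<Rightarrow> 'o) \<Rightarrow> ('m \<Rightarrow> 'm) \<Rightarrow> ('o \<Rightarrow> 'o) \<Rightarrow> ('m \<Rightarrow> 'm) \<Rightarrow> ('o \<Rightarrow> 'o) \<Rightarrow> ('o \<Rightarrow> 'm)
     \<Rightarrow> ('o \<Rightarrow> 'm) \<Rightarrow> ('o \<Rightarrow> 'm) \<Rightarrow> 'o \<Rightarrow> 'm \<Rightarrow> 'm \<Rightarrow> bool" where
  "is_interpretation \<A> P p1 p2 Ho Hm Ko Km Mo phi eta l C c b \<longleftrightarrow>
     hom \<A> b (Ko C) C \<and>
     Comp \<A> c b =
       Comp \<A> (Hm (sharp \<A> Ko Km Mo phi eta C b))
         (Comp \<A> (l C) (Km (pairing \<A> P p1 p2 c (Ide \<A> C))))"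

end

theory Submission
  imports Defs
begin


locale S =
  fixes \<A> :: "('o, 'm) category"
    and P :: "'o \<Rightarrow> 'o \<Rightarrow> 'o" and p1 p2 :: "'o \<Rightarrow> 'o \<Rightarrow> 'm"
    and Ho Ko Mo :: "'o \<Rightarrow> 'o" and Hm Km :: "'m \<Rightarrow> 'm"
    and phi eta l :: "'o \<Rightarrow> 'm"
    and C :: 'o and c b :: 'm
  assumes cat: "is_category \<A>"
    and prods: "has_chosen_products \<A> P p1 p2"
    and H: "is_endofunctor \<A> Ho Hm"
    and K: "is_endofunctor \<A> Ko Km"
    and free: "has_free_algebras \<A> Ko Km Mo phi eta"
    and terminal: "is_terminal_coalg \<A> Ho Hm C c"
    and rule: "is_gsos_rule \<A> P p1 p2 Ho Hm Ko Km Mo phi eta l"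
    and interp: "is_interpretation \<A> P p1 p2 Ho Hm Ko Km Mo phi eta l C c b"
begin

abbreviation arr where "arr f \<equiv> f \<in> Arr \<A>"
abbreviation obj where "obj A \<equiv> A \<in> Obj \<A>"
abbreviation dm where "dm f \<equiv> Dom \<A> f"
abbreviation cd where "cd f \<equiv> Cod \<A> f"
abbreviation I where "I A \<equiv> Ide \<A> A"
abbreviation cmp (infixr "\<cdot>" 55) where "g \<cdot> f \<equiv> Comp \<A> g f"

lemma hom_iff: "hom \<A> f A B \<longleftrightarrow> arr f \<and> dm f = A \<and> cd f = B" by (simp add: hom_def)

lemma arr_obj[simp]: "arr f \<Longrightarrow> obj (dm f)" "arr f \<Longrightarrow> obj (cd f)"
  using cat unfolding is_category_def by auto

lemma comp_typ[simp]:
  assumes "arr f" "arr g" "cd f = dm g"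
  shows "arr (g \<cdot> f)" "dm (g \<cdot> f) = dm f" "cd (g \<cdot> f) = cd g"
proof -
  have "hom \<A> (g \<cdot> f) (dm f) (cd g)" using cat assms unfolding is_category_def hom_iff by metis
  then show "arr (g \<cdot> f)" "dm (g \<cdot> f) = dm f" "cd (g \<cdot> f) = cd g" by (auto simp: hom_iff)
qed

lemma ide_typ[simp]: "obj A \<Longrightarrow> arr (I A)" "obj A \<Longrightarrow> dm (I A) = A" "obj A \<Longrightarrow> cd (I A) = A"
  using cat unfolding is_category_def hom_iff by auto

lemma comp_ide_l[simp]: "arr f \<Longrightarrow> cd f = B \<Longrightarrow> I B \<cdot> f = f"
  using cat unfolding is_category_def hom_iff by auto
lemma comp_ide_r[simp]: "arr f \<Longrightarrow> dm f = A \<Longrightarrow> f \<cdot> I A = f"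
  using cat unfolding is_category_def hom_iff by auto

lemma assoc[simp]: "arr f \<Longrightarrow> arr g \<Longrightarrow> arr h \<Longrightarrow> cd f = dm g \<Longrightarrow> cd g = dm h \<Longrightarrow>
   (h \<cdot> g) \<cdot> f = h \<cdot> g \<cdot> f"
proof -
  assume a: "arr f" "arr g" "arr h" "cd f = dm g" "cd g = dm h"
  have "\<forall>f g h A B C D. hom \<A> f A B \<longrightarrow> hom \<A> g B C \<longrightarrow> hom \<A> h C D \<longrightarrow>
         h \<cdot> (g \<cdot> f) = (h \<cdot> g) \<cdot> f" using cat unfolding is_category_def by blast
  then show ?thesis using a unfolding hom_iff by metis
qed

lemma reassoc:
  assumes "g \<cdot> f = k" "arr f" "arr g" "arr w" "cd f = dm g" "cd w = dm f"
  shows "g \<cdot> f \<cdot> w = k \<cdot> w"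
  using assoc[of w f g] assms by simp

lemma reassoc2:
  assumes "g \<cdot> f = k1 \<cdot> k2" "arr f" "arr g" "arr w" "arr k1" "arr k2" "cd f = dm g" "cd w = dm f"
    "cd k2 = dm k1" "dm k2 = dm f"
  shows "g \<cdot> f \<cdot> w = k1 \<cdot> k2 \<cdot> w"
proof -
  have "g \<cdot> f \<cdot> w = (g \<cdot> f) \<cdot> w" using assms(2-) by simp
  also have "\<dots> = (k1 \<cdot> k2) \<cdot> w" using assms(1) by simp
  also have "\<dots> = k1 \<cdot> k2 \<cdot> w" using assms(2-) by simp
  finally show ?thesis .
qed

lemma H_typ[simp]: "arr f \<Longrightarrow> arr (Hm f)" "arr f \<Longrightarrow> dm (Hm f) = Ho (dm f)" "arr f \<Longrightarrow> cd (Hm f) = Ho (cd f)"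
  "obj A \<Longrightarrow> obj (Ho A)" "obj A \<Longrightarrow> Hm (I A) = I (Ho A)"
  using H unfolding is_endofunctor_def hom_iff by auto
lemma H_comp[simp]: "arr f \<Longrightarrow> arr g \<Longrightarrow> cd f = dm g \<Longrightarrow> Hm (g \<cdot> f) = Hm g \<cdot> Hm f"
  using H unfolding is_endofunctor_def hom_iff by auto
lemma K_typ[simp]: "arr f \<Longrightarrow> arr (Km f)" "arr f \<Longrightarrow> dm (Km f) = Ko (dm f)" "arr f \<Longrightarrow> cd (Km f) = Ko (cd f)"
  "obj A \<Longrightarrow> obj (Ko A)" "obj A \<Longrightarrow> Km (I A) = I (Ko A)"
  using K unfolding is_endofunctor_def hom_iff by auto
lemma K_comp[simp]: "arr f \<Longrightarrow> arr g \<Longrightarrow> cd f = dm g \<Longrightarrow> Km (g \<cdot> f) = Km g \<cdot> Km f"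
  using K unfolding is_endofunctor_def hom_iff by auto

end

context S begin

abbreviation pair where "pair f g \<equiv> pairing \<A> P p1 p2 f g"

lemma P_typ[simp]:
  assumes "obj A" "obj B"
  shows "obj (P A B)" "arr (p1 A B)" "dm (p1 A B) = P A B" "cd (p1 A B) = A"
    "arr (p2 A B)" "dm (p2 A B) = P A B" "cd (p2 A B) = B"
  using prods assms unfolding has_chosen_products_def is_product_def hom_iff by auto

lemma pair_props:
  assumes "arr f" "arr g" "dm f = dm g"
  shows "arr (pair f g) \<and> dm (pair f g) = dm f \<and> cd (pair f g) = P (cd f) (cd g) \<and>
     p1 (cd f) (cd g) \<cdot> pair f g = f \<and> p2 (cd f) (cd g) \<cdot> pair f g = g"
proof -
  have pr: "is_product \<A> (cd f) (cd g) (P (cd f) (cd g)) (p1 (cd f) (cd g)) (p2 (cd f) (cd g))"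
    using prods assms unfolding has_chosen_products_def by auto
  then have u: "\<forall>Z f' g'. hom \<A> f' Z (cd f) \<longrightarrow> hom \<A> g' Z (cd g) \<longrightarrow>
        (\<exists>!h. hom \<A> h Z (P (cd f) (cd g)) \<and> p1 (cd f) (cd g) \<cdot> h = f' \<and> p2 (cd f) (cd g) \<cdot> h = g')"
    unfolding is_product_def by blast
  have hf: "hom \<A> f (dm f) (cd f)" and hg: "hom \<A> g (dm f) (cd g)" using assms by (auto simp: hom_iff)
  have "\<exists>!h. hom \<A> h (dm f) (P (cd f) (cd g)) \<and> p1 (cd f) (cd g) \<cdot> h = f \<and> p2 (cd f) (cd g) \<cdot> h = g"
    using u[rule_format, OF hf hg] .
  then have "hom \<A> (pair f g) (dm f) (P (cd f) (cd g)) \<and> p1 (cd f) (cd g) \<cdot> pair f g = f \<and> p2 (cd f) (cd g) \<cdot> pair f g = g"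
    unfolding pairing_def by (rule theI')
  then show ?thesis by (auto simp: hom_iff)
qed

lemma pair_typ[simp]:
  assumes "arr f" "arr g" "dm f = dm g"
  shows "arr (pair f g)" "dm (pair f g) = dm f" "cd (pair f g) = P (cd f) (cd g)"
  using pair_props[OF assms] by auto

lemma pair_p1[simp]: "arr f \<Longrightarrow> arr g \<Longrightarrow> dm f = dm g \<Longrightarrow> cd f = A \<Longrightarrow> cd g = B \<Longrightarrow> p1 A B \<cdot> pair f g = f"
  using pair_props by blast
lemma pair_p2[simp]: "arr f \<Longrightarrow> arr g \<Longrightarrow> dm f = dm g \<Longrightarrow> cd f = A \<Longrightarrow> cd g = B \<Longrightarrow> p2 A B \<cdot> pair f g = g"
  using pair_props by blast

lemma ex1_eq: "\<exists>!x. R x \<Longrightarrow> R u \<Longrightarrow> R v \<Longrightarrow> u = v" by blast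

lemma pair_eq:
  assumes "obj A" "obj B" "arr h1" "arr h2" "dm h1 = dm h2" "cd h1 = P A B" "cd h2 = P A B"
    "p1 A B \<cdot> h1 = p1 A B \<cdot> h2" "p2 A B \<cdot> h1 = p2 A B \<cdot> h2"
  shows "h1 = h2"
proof -
  have pr: "is_product \<A> A B (P A B) (p1 A B) (p2 A B)"
    using prods assms unfolding has_chosen_products_def by auto
  have "hom \<A> (p1 A B \<cdot> h1) (dm h1) A" "hom \<A> (p2 A B \<cdot> h1) (dm h1) B" using assms by (auto simp: hom_iff)
  then have "\<exists>!h. hom \<A> h (dm h1) (P A B) \<and> p1 A B \<cdot> h = p1 A B \<cdot> h1 \<and> p2 A B \<cdot> h = p2 A B \<cdot> h1"
    using pr unfolding is_product_def by blast
  moreover have "hom \<A> h1 (dm h1) (P A B)" "hom \<A> h2 (dm h1) (P A B)" using assms by (auto simp: hom_iff)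
  ultimately show ?thesis using assms ex1_eq by (smt (verit))
qed

lemma pair_unique:
  assumes "obj A" "obj B" "arr h" "cd h = P A B" "p1 A B \<cdot> h = f" "p2 A B \<cdot> h = g"
  shows "h = pair f g"
proof -
  have f: "arr f" "dm f = dm h" "cd f = A" using assms by auto
  have g: "arr g" "dm g = dm h" "cd g = B" using assms by auto
  show ?thesis
    apply (rule pair_eq[OF assms(1,2)]) using assms f g by auto
qed

lemma pair_comp[simp]:
  assumes "arr f" "arr g" "arr h" "dm f = dm g" "cd h = dm f"
  shows "pair f g \<cdot> h = pair (f \<cdot> h) (g \<cdot> h)"
proof (rule pair_unique[of "cd f" "cd g"])
  show "p1 (cd f) (cd g) \<cdot> (pair f g \<cdot> h) = f \<cdot> h" using assms by (intro reassoc) auto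
  show "p2 (cd f) (cd g) \<cdot> (pair f g \<cdot> h) = g \<cdot> h" using assms by (intro reassoc) auto
qed (use assms in auto)

definition cross where
  "cross f g = pair (f \<cdot> p1 (dm f) (dm g)) (g \<cdot> p2 (dm f) (dm g))"

lemma cross_typ[simp]:
  assumes "arr f" "arr g"
  shows "arr (cross f g)" "dm (cross f g) = P (dm f) (dm g)" "cd (cross f g) = P (cd f) (cd g)"
  using assms unfolding cross_def by auto

lemma cross_pair[simp]:
  assumes "arr f" "arr g" "arr u" "arr v" "dm u = dm v" "cd u = dm f" "cd v = dm g"
  shows "cross f g \<cdot> pair u v = pair (f \<cdot> u) (g \<cdot> v)"
  using assms unfolding cross_def by (simp add: assoc)

lemma cross_cross[simp]:
  assumes "arr f" "arr g" "arr f'" "arr g'" "cd f' = dm f" "cd g' = dm g"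
  shows "cross f g \<cdot> cross f' g' = cross (f \<cdot> f') (g \<cdot> g')"
  using assms by (subst (2) cross_def) (simp add: cross_def[of "f \<cdot> f'"])

lemma cross_p1[simp]: "arr f \<Longrightarrow> arr g \<Longrightarrow> cd f = A \<Longrightarrow> cd g = B \<Longrightarrow> p1 A B \<cdot> cross f g = f \<cdot> p1 (dm f) (dm g)"
  unfolding cross_def by simp
lemma cross_p2[simp]: "arr f \<Longrightarrow> arr g \<Longrightarrow> cd f = A \<Longrightarrow> cd g = B \<Longrightarrow> p2 A B \<cdot> cross f g = g \<cdot> p2 (dm f) (dm g)"
  unfolding cross_def by simp

lemma prodId: "arr f \<Longrightarrow> prodId_mor \<A> P p1 p2 Ho Hm f = cross (Hm f) f"
  unfolding prodId_mor_def cross_def by simp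

end

context S begin

lemma C_typ[simp]: "obj C" "arr c" "dm c = C" "cd c = Ho C"
  using terminal unfolding is_terminal_coalg_def hom_iff by auto

lemma coalg_ex:
  assumes "obj A" "arr a" "dm a = A" "cd a = Ho A"
  shows "\<exists>h. arr h \<and> dm h = A \<and> cd h = C \<and> c \<cdot> h = Hm h \<cdot> a"
proof -
  have "\<exists>!h. hom \<A> h A C \<and> c \<cdot> h = Hm h \<cdot> a"
    using terminal assms unfolding is_terminal_coalg_def hom_iff by blast
  then show ?thesis unfolding hom_iff by blast
qed

lemma coalg_eq:
  assumes "obj A" "arr a" "dm a = A" "cd a = Ho A"
    and "arr h1" "dm h1 = A" "cd h1 = C" "c \<cdot> h1 = Hm h1 \<cdot> a"
    and "arr h2" "dm h2 = A" "cd h2 = C" "c \<cdot> h2 = Hm h2 \<cdot> a"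
  shows "h1 = h2"
proof -
  have "\<exists>!h. hom \<A> h A C \<and> c \<cdot> h = Hm h \<cdot> a"
    using terminal assms unfolding is_terminal_coalg_def hom_iff by blast
  then show ?thesis using assms unfolding hom_iff by blast
qed

abbreviation ci where "ci \<equiv> inverse_mor \<A> c"

lemma lambek: "arr ci \<and> dm ci = Ho C \<and> cd ci = C \<and> ci \<cdot> c = I C \<and> c \<cdot> ci = I (Ho C)"
proof -
  obtain h where h: "arr h" "dm h = Ho C" "cd h = C" "c \<cdot> h = Hm h \<cdot> Hm c"
    using coalg_ex[of "Ho C" "Hm c"] by auto
  have hc: "h \<cdot> c = I C"
  proof (rule coalg_eq[of C c])
    have "c \<cdot> h \<cdot> c = (Hm h \<cdot> Hm c) \<cdot> c" by (rule reassoc) (use h in auto)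
    then show "c \<cdot> h \<cdot> c = Hm (h \<cdot> c) \<cdot> c" using h by simp
  qed (use h in auto)
  have "c \<cdot> h = Hm (h \<cdot> c)" using h by simp
  then have ch: "c \<cdot> h = I (Ho C)" using hc by simp
  have inv: "hom \<A> h (cd c) (dm c) \<and> h \<cdot> c = I (dm c) \<and> c \<cdot> h = I (cd c)"
    using h hc ch by (simp add: hom_iff)
  have uniq: "g = h" if "hom \<A> g (cd c) (dm c) \<and> g \<cdot> c = I (dm c) \<and> c \<cdot> g = I (cd c)" for g
  proof -
    have g: "arr g" "dm g = Ho C" "cd g = C" "g \<cdot> c = I C" "c \<cdot> g = I (Ho C)" using that by (auto simp: hom_iff)
    have "g = g \<cdot> (c \<cdot> h)" using g ch by simp
    also have "\<dots> = (g \<cdot> c) \<cdot> h" using g(1-3) h(1-3) by simp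
    also have "\<dots> = h" using g h(1-3) by (simp del: assoc)
    finally show ?thesis .
  qed
  have "ci = h" unfolding inverse_mor_def using inv uniq by (rule the_equality)
  then show ?thesis using h hc ch by simp
qed

lemma ci_typ[simp]: "arr ci" "dm ci = Ho C" "cd ci = C" "ci \<cdot> c = I C" "c \<cdot> ci = I (Ho C)"
  using lambek by auto

lemma ci_c'[simp]: assumes "arr w" "cd w = C" shows "ci \<cdot> c \<cdot> w = w"
proof -
  have "(ci \<cdot> c) \<cdot> w = ci \<cdot> c \<cdot> w" by (rule assoc) (auto simp: assms)
  then show ?thesis using assms by simp
qed
lemma c_ci'[simp]: assumes "arr w" "cd w = Ho C" shows "c \<cdot> ci \<cdot> w = w"
proof -
  have "(c \<cdot> ci) \<cdot> w = c \<cdot> ci \<cdot> w" by (rule assoc) (auto simp: assms)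
  then show ?thesis using assms by simp
qed

lemma b_typ[simp]: "arr b" "dm b = Ko C" "cd b = C"
  using interp unfolding is_interpretation_def hom_iff by auto

end

context S begin

definition alg where "alg A a \<longleftrightarrow> arr a \<and> dm a = Ko A \<and> cd a = A"
definition ahom where "ahom A a B a' h \<longleftrightarrow> arr h \<and> dm h = A \<and> cd h = B \<and> h \<cdot> a = a' \<cdot> Km h"

lemma alg_hom_iff: "is_alg_hom \<A> Ko Km A a B a' h \<longleftrightarrow> ahom A a B a' h"
  unfolding is_alg_hom_def ahom_def hom_iff by auto

lemma free_typ[simp]:
  assumes "obj X"
  shows "obj (Mo X)" "arr (phi X)" "dm (phi X) = Ko (Mo X)" "cd (phi X) = Mo X"
    "arr (eta X)" "dm (eta X) = X" "cd (eta X) = Mo X"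
  using free assms unfolding has_free_algebras_def is_alg_def hom_iff by auto

lemma alg_phi[simp]: "obj X \<Longrightarrow> alg (Mo X) (phi X)" by (simp add: alg_def)

lemma ext_ex:
  assumes "obj X" "alg A a" "arr f" "dm f = X" "cd f = A"
  shows "\<exists>!h. ahom (Mo X) (phi X) A a h \<and> h \<cdot> eta X = f"
proof -
  have 1: "is_alg \<A> Ko A a" "hom \<A> f X A" using assms unfolding is_alg_def alg_def hom_iff by auto
  have "\<forall>A a f. is_alg \<A> Ko A a \<longrightarrow> hom \<A> f X A \<longrightarrow>
           (\<exists>!h. is_alg_hom \<A> Ko Km (Mo X) (phi X) A a h \<and> h \<cdot> eta X = f)"
    using free assms(1) unfolding has_free_algebras_def by blast
  from this[rule_format, OF 1] show ?thesis unfolding alg_hom_iff .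
qed

lemma alg_eq:
  assumes "obj X" "alg A a" "ahom (Mo X) (phi X) A a h1" "ahom (Mo X) (phi X) A a h2"
    "h1 \<cdot> eta X = h2 \<cdot> eta X"
  shows "h1 = h2"
proof -
  have "arr (h1 \<cdot> eta X)" "dm (h1 \<cdot> eta X) = X" "cd (h1 \<cdot> eta X) = A"
    using assms unfolding ahom_def by auto
  then have u: "\<exists>!h. ahom (Mo X) (phi X) A a h \<and> h \<cdot> eta X = h1 \<cdot> eta X" by (intro ext_ex[OF assms(1,2)])
  show ?thesis by (rule ex1_eq[OF u]) (use assms(3-5) in auto)
qed

lemma ahom_comp:
  assumes "ahom A a B a' h" "ahom B a' D a'' k" "alg A a" "alg B a'" "alg D a''"
  shows "ahom A a D a'' (k \<cdot> h)"
proof -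
  have "(k \<cdot> h) \<cdot> a = k \<cdot> (h \<cdot> a)" using assms unfolding ahom_def alg_def by simp
  also have "\<dots> = k \<cdot> (a' \<cdot> Km h)" using assms unfolding ahom_def by simp
  also have "\<dots> = (k \<cdot> a') \<cdot> Km h" using assms unfolding ahom_def alg_def by (intro assoc[symmetric]) auto
  also have "\<dots> = (a'' \<cdot> Km k) \<cdot> Km h" using assms unfolding ahom_def by simp
  also have "\<dots> = a'' \<cdot> Km (k \<cdot> h)" using assms unfolding ahom_def alg_def by simp
  finally show ?thesis using assms unfolding ahom_def by simp
qed

lemma ahom_id: "alg A a \<Longrightarrow> obj A \<Longrightarrow> ahom A a A a (I A)"
  unfolding ahom_def alg_def by simp

abbreviation Mm where "Mm f \<equiv> M_mor \<A> Ko Km Mo phi eta f"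

lemma M_props:
  assumes "arr f"
  shows "ahom (Mo (dm f)) (phi (dm f)) (Mo (cd f)) (phi (cd f)) (Mm f) \<and> Mm f \<cdot> eta (dm f) = eta (cd f) \<cdot> f"
proof -
  have "\<exists>!h. ahom (Mo (dm f)) (phi (dm f)) (Mo (cd f)) (phi (cd f)) h \<and> h \<cdot> eta (dm f) = eta (cd f) \<cdot> f"
    using assms by (intro ext_ex) auto
  then show ?thesis unfolding M_mor_def alg_hom_iff by (rule theI')
qed

lemma M_typ[simp]: "arr f \<Longrightarrow> arr (Mm f)" "arr f \<Longrightarrow> dm (Mm f) = Mo (dm f)" "arr f \<Longrightarrow> cd (Mm f) = Mo (cd f)"
  using M_props unfolding ahom_def by auto

lemma ahom_M: "arr f \<Longrightarrow> dm f = A \<Longrightarrow> cd f = B \<Longrightarrow> ahom (Mo A) (phi A) (Mo B) (phi B) (Mm f)"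
  using M_props by blast

lemma M_eta[simp]: "arr f \<Longrightarrow> dm f = A \<Longrightarrow> Mm f \<cdot> eta A = eta (cd f) \<cdot> f"
  using M_props by blast
lemma M_eta'[simp]: "arr f \<Longrightarrow> dm f = A \<Longrightarrow> arr w \<Longrightarrow> cd w = A \<Longrightarrow> Mm f \<cdot> eta A \<cdot> w = eta (cd f) \<cdot> f \<cdot> w"
  by (rule reassoc2) (use M_eta in auto)
lemma M_phi[simp]: "arr f \<Longrightarrow> dm f = A \<Longrightarrow> Mm f \<cdot> phi A = phi (cd f) \<cdot> Km (Mm f)"
  using M_props unfolding ahom_def by blast
lemma M_phi'[simp]: "arr f \<Longrightarrow> dm f = A \<Longrightarrow> arr w \<Longrightarrow> cd w = Ko (Mo A) \<Longrightarrow> Mm f \<cdot> phi A \<cdot> w = phi (cd f) \<cdot> Km (Mm f) \<cdot> w"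
  by (rule reassoc2) (use M_phi in auto)

lemma M_id[simp]: "obj A \<Longrightarrow> Mm (I A) = I (Mo A)"
  by (rule alg_eq[of A "Mo A" "phi A"]) (auto intro: ahom_M ahom_id)

lemma M_comp[simp]:
  assumes "arr f" "arr g" "cd f = dm g"
  shows "Mm (g \<cdot> f) = Mm g \<cdot> Mm f"
proof (rule alg_eq[of "dm f" "Mo (cd g)" "phi (cd g)"])
  show "ahom (Mo (dm f)) (phi (dm f)) (Mo (cd g)) (phi (cd g)) (Mm g \<cdot> Mm f)"
    using assms by (intro ahom_comp[of _ _ "Mo (dm g)" "phi (dm g)"] ahom_M) auto
  show "Mm (g \<cdot> f) \<cdot> eta (dm f) = (Mm g \<cdot> Mm f) \<cdot> eta (dm f)"
    using assms by simp
qed (use assms in \<open>auto intro: ahom_M\<close>)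

abbreviation sh where "sh A a \<equiv> sharp \<A> Ko Km Mo phi eta A a"

lemma sh_props:
  assumes "alg A a"
  shows "ahom (Mo A) (phi A) A a (sh A a) \<and> sh A a \<cdot> eta A = I A"
proof -
  have oA: "obj A" using assms unfolding alg_def by (metis arr_obj(2))
  have "\<exists>!h. ahom (Mo A) (phi A) A a h \<and> h \<cdot> eta A = I A"
    using assms oA by (intro ext_ex) auto
  then show ?thesis unfolding sharp_def alg_hom_iff by (rule theI')
qed

lemma alg_obj: "alg A a \<Longrightarrow> obj A" unfolding alg_def by (metis arr_obj(2))

lemma sh_typ[simp]: "alg A a \<Longrightarrow> arr (sh A a)" "alg A a \<Longrightarrow> dm (sh A a) = Mo A" "alg A a \<Longrightarrow> cd (sh A a) = A"
  using sh_props unfolding ahom_def by auto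
lemma ahom_sh: "alg A a \<Longrightarrow> ahom (Mo A) (phi A) A a (sh A a)" using sh_props by blast
lemma sh_eta[simp]: "alg A a \<Longrightarrow> sh A a \<cdot> eta A = I A" using sh_props by blast
lemma sh_eta'[simp]: "alg A a \<Longrightarrow> arr w \<Longrightarrow> cd w = A \<Longrightarrow> sh A a \<cdot> eta A \<cdot> w = w"
proof -
  assume a: "alg A a" "arr w" "cd w = A"
  have "sh A a \<cdot> eta A \<cdot> w = I A \<cdot> w" by (rule reassoc) (use a alg_obj in auto)
  then show ?thesis using a by simp
qed
lemma sh_phi[simp]: "alg A a \<Longrightarrow> sh A a \<cdot> phi A = a \<cdot> Km (sh A a)" using sh_props unfolding ahom_def by blast
lemma sh_phi'[simp]: "alg A a \<Longrightarrow> arr w \<Longrightarrow> cd w = Ko (Mo A) \<Longrightarrow> sh A a \<cdot> phi A \<cdot> w = a \<cdot> Km (sh A a) \<cdot> w"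
  by (rule reassoc2) (use alg_obj in \<open>auto simp: alg_def\<close>)

abbreviation mu where "mu X \<equiv> sh (Mo X) (phi X)"

lemma mu_typ[simp]: "obj X \<Longrightarrow> arr (mu X)" "obj X \<Longrightarrow> dm (mu X) = Mo (Mo X)" "obj X \<Longrightarrow> cd (mu X) = Mo X"
  by auto

lemma ahom_mu: "obj X \<Longrightarrow> ahom (Mo (Mo X)) (phi (Mo X)) (Mo X) (phi X) (mu X)"
  by (rule ahom_sh) simp

lemma alg_b[simp]: "alg C b" unfolding alg_def by simp

end

context S begin

lemma ahom_typ: "ahom A a B a' h \<Longrightarrow> arr h" "ahom A a B a' h \<Longrightarrow> dm h = A" "ahom A a B a' h \<Longrightarrow> cd h = B"
  unfolding ahom_def by auto

lemma sh_M_ahom: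
  assumes "obj Y" "alg A a" "ahom (Mo Y) (phi Y) A a h"
  shows "sh A a \<cdot> Mm h = h \<cdot> mu Y"
proof (rule alg_eq[of "Mo Y" A a])
  have h: "arr h" "dm h = Mo Y" "cd h = A" using assms ahom_typ by auto
  show "ahom (Mo (Mo Y)) (phi (Mo Y)) A a (sh A a \<cdot> Mm h)"
    using assms h by (intro ahom_comp[of _ _ "Mo A" "phi A"] ahom_M ahom_sh) (auto dest: alg_obj)
  show "ahom (Mo (Mo Y)) (phi (Mo Y)) A a (h \<cdot> mu Y)"
    using assms h by (intro ahom_comp[of _ _ "Mo Y" "phi Y"] ahom_mu) auto
  show "(sh A a \<cdot> Mm h) \<cdot> eta (Mo Y) = (h \<cdot> mu Y) \<cdot> eta (Mo Y)"
    using assms h by simp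
qed (use assms in auto)

lemma mu_nat:
  assumes "arr f" "dm f = A"
  shows "Mm f \<cdot> mu A = mu (cd f) \<cdot> Mm (Mm f)"
proof -
  have "ahom (Mo A) (phi A) (Mo (cd f)) (phi (cd f)) (Mm f)" using assms by (intro ahom_M) auto
  then show ?thesis using sh_M_ahom[of A "Mo (cd f)" "phi (cd f)" "Mm f"] assms by auto
qed

lemma mu_Meta[simp]: "obj X \<Longrightarrow> mu X \<cdot> Mm (eta X) = I (Mo X)"
proof (rule alg_eq[of X "Mo X" "phi X"])
  assume X: "obj X"
  show "ahom (Mo X) (phi X) (Mo X) (phi X) (mu X \<cdot> Mm (eta X))"
    using X by (intro ahom_comp[of _ _ "Mo (Mo X)" "phi (Mo X)"] ahom_M ahom_mu) auto
  show "(mu X \<cdot> Mm (eta X)) \<cdot> eta X = I (Mo X) \<cdot> eta X" using X by simp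
qed (auto intro: ahom_id)

lemma mu_assoc: "obj X \<Longrightarrow> mu X \<cdot> Mm (mu X) = mu X \<cdot> mu (Mo X)"
  using sh_M_ahom[of "Mo X" "Mo X" "phi X" "mu X"] ahom_mu by auto

lemma sh_recover: "alg A a \<Longrightarrow> sh A a \<cdot> phi A \<cdot> Km (eta A) = a"
proof -
  assume a: "alg A a"
  then have "sh A a \<cdot> phi A \<cdot> Km (eta A) = a \<cdot> Km (sh A a) \<cdot> Km (eta A)"
    using alg_obj by (subst sh_phi') auto
  also have "\<dots> = a \<cdot> Km (sh A a \<cdot> eta A)" using a alg_obj by (subst K_comp) auto
  also have "\<dots> = a" using a alg_obj[OF a] by (auto simp: alg_def)
  finally show ?thesis .
qed

end

context S begin

lemma pair_p1'[simp]: "arr f \<Longrightarrow> arr g \<Longrightarrow> dm f = dm g \<Longrightarrow> cd f = A \<Longrightarrow> cd g = B \<Longrightarrow> arr w \<Longrightarrow> cd w = dm f \<Longrightarrow> p1 A B \<cdot> pair f g \<cdot> w = f \<cdot> w"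
  by (rule reassoc) auto
lemma pair_p2'[simp]: "arr f \<Longrightarrow> arr g \<Longrightarrow> dm f = dm g \<Longrightarrow> cd f = A \<Longrightarrow> cd g = B \<Longrightarrow> arr w \<Longrightarrow> cd w = dm f \<Longrightarrow> p2 A B \<cdot> pair f g \<cdot> w = g \<cdot> w"
  by (rule reassoc) auto
lemma cross_p1'[simp]: "arr f \<Longrightarrow> arr g \<Longrightarrow> cd f = A \<Longrightarrow> cd g = B \<Longrightarrow> arr w \<Longrightarrow> cd w = P (dm f) (dm g) \<Longrightarrow> p1 A B \<cdot> cross f g \<cdot> w = f \<cdot> p1 (dm f) (dm g) \<cdot> w"
  by (rule reassoc2) auto
lemma cross_p2'[simp]: "arr f \<Longrightarrow> arr g \<Longrightarrow> cd f = A \<Longrightarrow> cd g = B \<Longrightarrow> arr w \<Longrightarrow> cd w = P (dm f) (dm g) \<Longrightarrow> p2 A B \<cdot> cross f g \<cdot> w = g \<cdot> p2 (dm f) (dm g) \<cdot> w"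
  by (rule reassoc2) auto

lemma l_typ[simp]: "obj X \<Longrightarrow> arr (l X)" "obj X \<Longrightarrow> dm (l X) = Ko (P (Ho X) X)" "obj X \<Longrightarrow> cd (l X) = Ho (Mo X)"
  using rule unfolding is_gsos_rule_def hom_iff by auto

lemma l_nat: "arr f \<Longrightarrow> l (cd f) \<cdot> Km (cross (Hm f) f) = Hm (Mm f) \<cdot> l (dm f)"
  using rule unfolding is_gsos_rule_def hom_iff by (auto simp: prodId)

lemma l_nat': "arr f \<Longrightarrow> arr w \<Longrightarrow> cd w = Ko (P (Ho (dm f)) (dm f)) \<Longrightarrow>
   l (cd f) \<cdot> Km (cross (Hm f) f) \<cdot> w = Hm (Mm f) \<cdot> l (dm f) \<cdot> w"
  by (rule reassoc2) (use l_nat in auto)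

lemma interp_eq: "c \<cdot> b = Hm (sh C b) \<cdot> l C \<cdot> Km (pair c (I C))"
  using interp unfolding is_interpretation_def by auto

abbreviation Q where "Q Y \<equiv> P (Ho Y) Y"

definition alpha where
  "alpha Y = pair (Hm (mu Y) \<cdot> l (Mo Y)) (phi Y \<cdot> Km (p2 (Ho (Mo Y)) (Mo Y)))"

lemma alpha_typ[simp]: "obj Y \<Longrightarrow> arr (alpha Y)" "obj Y \<Longrightarrow> dm (alpha Y) = Ko (Q (Mo Y))" "obj Y \<Longrightarrow> cd (alpha Y) = Q (Mo Y)"
  unfolding alpha_def by auto

lemma alg_alpha[simp]: "obj Y \<Longrightarrow> alg (Q (Mo Y)) (alpha Y)" unfolding alg_def by simp

definition rho where
  "rho Y = (THE h. ahom (Mo (Q Y)) (phi (Q Y)) (Q (Mo Y)) (alpha Y) h \<and> h \<cdot> eta (Q Y) = cross (Hm (eta Y)) (eta Y))"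

lemma rho_props:
  assumes "obj Y"
  shows "ahom (Mo (Q Y)) (phi (Q Y)) (Q (Mo Y)) (alpha Y) (rho Y) \<and> rho Y \<cdot> eta (Q Y) = cross (Hm (eta Y)) (eta Y)"
  unfolding rho_def by (rule theI') (rule ext_ex, use assms in auto)

lemma rho_typ[simp]: "obj Y \<Longrightarrow> arr (rho Y)" "obj Y \<Longrightarrow> dm (rho Y) = Mo (Q Y)" "obj Y \<Longrightarrow> cd (rho Y) = Q (Mo Y)"
  using rho_props unfolding ahom_def by auto
lemma ahom_rho: "obj Y \<Longrightarrow> ahom (Mo (Q Y)) (phi (Q Y)) (Q (Mo Y)) (alpha Y) (rho Y)"
  using rho_props by blast
lemma rho_eta[simp]: "obj Y \<Longrightarrow> rho Y \<cdot> eta (Q Y) = cross (Hm (eta Y)) (eta Y)"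
  using rho_props by blast
lemma rho_eta'[simp]: "obj Y \<Longrightarrow> arr w \<Longrightarrow> cd w = Q Y \<Longrightarrow> rho Y \<cdot> eta (Q Y) \<cdot> w = cross (Hm (eta Y)) (eta Y) \<cdot> w"
  by (rule reassoc) auto
lemma rho_phi[simp]: "obj Y \<Longrightarrow> rho Y \<cdot> phi (Q Y) = alpha Y \<cdot> Km (rho Y)"
  using rho_props unfolding ahom_def by blast

lemma ahom_p2: "obj Y \<Longrightarrow> ahom (Q (Mo Y)) (alpha Y) (Mo Y) (phi Y) (p2 (Ho (Mo Y)) (Mo Y))"
  unfolding ahom_def alpha_def by simp

lemma rho_p2: "obj Y \<Longrightarrow> p2 (Ho (Mo Y)) (Mo Y) \<cdot> rho Y = Mm (p2 (Ho Y) Y)"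
proof (rule alg_eq[of "Q Y" "Mo Y" "phi Y"])
  assume Y: "obj Y"
  show "ahom (Mo (Q Y)) (phi (Q Y)) (Mo Y) (phi Y) (p2 (Ho (Mo Y)) (Mo Y) \<cdot> rho Y)"
    using Y by (intro ahom_comp[OF ahom_rho ahom_p2]) auto
  show "ahom (Mo (Q Y)) (phi (Q Y)) (Mo Y) (phi Y) (Mm (p2 (Ho Y) Y))"
    using Y by (intro ahom_M) auto
  show "(p2 (Ho (Mo Y)) (Mo Y) \<cdot> rho Y) \<cdot> eta (Q Y) = Mm (p2 (Ho Y) Y) \<cdot> eta (Q Y)"
    using Y by simp
qed auto

end

context S begin

lemma cross_alpha:
  assumes f: "arr f" "dm f = Y" "cd f = Y'"
  shows "ahom (Q (Mo Y)) (alpha Y) (Q (Mo Y')) (alpha Y') (cross (Hm (Mm f)) (Mm f))"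
proof -
  have Y: "obj Y" "obj Y'" using f by auto
  let ?x = "cross (Hm (Mm f)) (Mm f)"
  have e1: "p1 (Ho (Mo Y')) (Mo Y') \<cdot> ?x \<cdot> alpha Y = p1 (Ho (Mo Y')) (Mo Y') \<cdot> alpha Y' \<cdot> Km ?x"
  proof -
    have "p1 (Ho (Mo Y')) (Mo Y') \<cdot> ?x \<cdot> alpha Y = Hm (Mm f) \<cdot> Hm (mu Y) \<cdot> l (Mo Y)"
      using f Y by (simp add: alpha_def)
    also have "\<dots> = Hm (Mm f \<cdot> mu Y) \<cdot> l (Mo Y)" using f Y by simp
    also have "\<dots> = Hm (mu Y' \<cdot> Mm (Mm f)) \<cdot> l (Mo Y)" using f Y by (simp add: mu_nat)
    also have "\<dots> = Hm (mu Y') \<cdot> Hm (Mm (Mm f)) \<cdot> l (Mo Y)" using f Y by simp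
    also have "\<dots> = Hm (mu Y') \<cdot> l (Mo Y') \<cdot> Km ?x"
      using f Y l_nat[of "Mm f"] by simp
    also have "\<dots> = p1 (Ho (Mo Y')) (Mo Y') \<cdot> alpha Y' \<cdot> Km ?x"
      using f Y by (simp add: alpha_def)
    finally show ?thesis .
  qed
  have e2: "p2 (Ho (Mo Y')) (Mo Y') \<cdot> ?x \<cdot> alpha Y = p2 (Ho (Mo Y')) (Mo Y') \<cdot> alpha Y' \<cdot> Km ?x"
  proof -
    have "p2 (Ho (Mo Y')) (Mo Y') \<cdot> ?x \<cdot> alpha Y = Mm f \<cdot> phi Y \<cdot> Km (p2 (Ho (Mo Y)) (Mo Y))"
      using f Y by (simp add: alpha_def)
    also have "\<dots> = phi Y' \<cdot> Km (Mm f) \<cdot> Km (p2 (Ho (Mo Y)) (Mo Y))"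
      using f Y by simp
    also have "\<dots> = phi Y' \<cdot> Km (Mm f \<cdot> p2 (Ho (Mo Y)) (Mo Y))"
      using f Y by simp
    also have "\<dots> = phi Y' \<cdot> Km (p2 (Ho (Mo Y')) (Mo Y') \<cdot> ?x)"
      using f Y by simp
    also have "\<dots> = phi Y' \<cdot> Km (p2 (Ho (Mo Y')) (Mo Y')) \<cdot> Km ?x"
      using f Y by (subst K_comp) auto
    also have "\<dots> = p2 (Ho (Mo Y')) (Mo Y') \<cdot> alpha Y' \<cdot> Km ?x"
      using f Y by (simp add: alpha_def)
    finally show ?thesis .
  qed
  have "?x \<cdot> alpha Y = alpha Y' \<cdot> Km ?x"
    by (rule pair_eq[of "Ho (Mo Y')" "Mo Y'"]) (use f Y e1 e2 in auto)
  then show ?thesis unfolding ahom_def using f Y by simp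
qed

lemma HM_eta[simp]: "arr f \<Longrightarrow> dm f = A \<Longrightarrow> Hm (Mm f) \<cdot> Hm (eta A) = Hm (eta (cd f)) \<cdot> Hm f"
proof -
  assume f: "arr f" "dm f = A"
  have "Hm (Mm f) \<cdot> Hm (eta A) = Hm (Mm f \<cdot> eta A)" using f by (intro H_comp[symmetric]) auto
  also have "\<dots> = Hm (eta (cd f) \<cdot> f)" using f by simp
  also have "\<dots> = Hm (eta (cd f)) \<cdot> Hm f" using f by (intro H_comp) auto
  finally show ?thesis .
qed

lemma rho_nat:
  assumes f: "arr f" "dm f = Y" "cd f = Y'"
  shows "rho Y' \<cdot> Mm (cross (Hm f) f) = cross (Hm (Mm f)) (Mm f) \<cdot> rho Y"
proof (rule alg_eq[of "Q Y" "Q (Mo Y')" "alpha Y'"])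
  have Y: "obj Y" "obj Y'" using f by auto
  show "ahom (Mo (Q Y)) (phi (Q Y)) (Q (Mo Y')) (alpha Y') (rho Y' \<cdot> Mm (cross (Hm f) f))"
    using f Y by (intro ahom_comp[OF ahom_M ahom_rho]) auto
  show "ahom (Mo (Q Y)) (phi (Q Y)) (Q (Mo Y')) (alpha Y') (cross (Hm (Mm f)) (Mm f) \<cdot> rho Y)"
    using f Y by (intro ahom_comp[OF ahom_rho cross_alpha]) auto
  show "(rho Y' \<cdot> Mm (cross (Hm f) f)) \<cdot> eta (Q Y) = (cross (Hm (Mm f)) (Mm f) \<cdot> rho Y) \<cdot> eta (Q Y)"
    using f Y by simp
qed (use f in auto)

end

context S begin

definition bialg where
  "bialg Z a z \<longleftrightarrow> alg Z a \<and> arr z \<and> dm z = Z \<and> cd z = Ho Z \<and>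
     z \<cdot> a = Hm (sh Z a) \<cdot> l Z \<cdot> Km (pair z (I Z))"

lemma H_sh_eta[simp]: "alg A a \<Longrightarrow> Hm (sh A a) \<cdot> Hm (eta A) = I (Ho A)"
proof -
  assume a: "alg A a"
  have "Hm (sh A a) \<cdot> Hm (eta A) = Hm (sh A a \<cdot> eta A)" using a alg_obj[OF a] by (intro H_comp[symmetric]) auto
  then show ?thesis using a alg_obj[OF a] by simp
qed

lemma H_sh_eta'[simp]: "alg A a \<Longrightarrow> arr w \<Longrightarrow> cd w = Ho A \<Longrightarrow> Hm (sh A a) \<cdot> Hm (eta A) \<cdot> w = w"
proof -
  assume a: "alg A a" "arr w" "cd w = Ho A"
  have "Hm (sh A a) \<cdot> Hm (eta A) \<cdot> w = I (Ho A) \<cdot> w" by (rule reassoc) (use a alg_obj[OF a(1)] in auto)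
  then show ?thesis using a by simp
qed

definition beta where "beta Z a = pair (Hm (sh Z a) \<cdot> l Z) (a \<cdot> Km (p2 (Ho Z) Z))"

lemma beta_typ[simp]: "alg Z a \<Longrightarrow> arr (beta Z a)" "alg Z a \<Longrightarrow> dm (beta Z a) = Ko (Q Z)" "alg Z a \<Longrightarrow> cd (beta Z a) = Q Z"
  using alg_obj unfolding beta_def by (auto simp: alg_def)

lemma alg_beta[simp]: "alg Z a \<Longrightarrow> alg (Q Z) (beta Z a)" by (simp add: alg_def[of "Q Z"])

lemma cross_beta:
  assumes a: "alg Z a"
  shows "ahom (Q (Mo Z)) (alpha Z) (Q Z) (beta Z a) (cross (Hm (sh Z a)) (sh Z a))"
proof -
  have Z: "obj Z" using alg_obj[OF a] .
  have a': "arr a" "dm a = Ko Z" "cd a = Z" using a unfolding alg_def by auto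
  let ?s = "sh Z a"
  let ?x = "cross (Hm ?s) ?s"
  have e1: "p1 (Ho Z) Z \<cdot> ?x \<cdot> alpha Z = p1 (Ho Z) Z \<cdot> beta Z a \<cdot> Km ?x"
  proof -
    have "p1 (Ho Z) Z \<cdot> ?x \<cdot> alpha Z = Hm ?s \<cdot> Hm (mu Z) \<cdot> l (Mo Z)"
      using a a' Z by (simp add: alpha_def)
    also have "\<dots> = Hm (?s \<cdot> mu Z) \<cdot> l (Mo Z)" using a a' Z by simp
    also have "\<dots> = Hm (?s \<cdot> Mm ?s) \<cdot> l (Mo Z)"
      using a Z sh_M_ahom[OF Z a ahom_sh[OF a]] by simp
    also have "\<dots> = Hm ?s \<cdot> Hm (Mm ?s) \<cdot> l (Mo Z)" using a a' Z by simp
    also have "\<dots> = Hm ?s \<cdot> l Z \<cdot> Km ?x"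
      using a Z l_nat[of ?s] by simp
    also have "\<dots> = p1 (Ho Z) Z \<cdot> beta Z a \<cdot> Km ?x"
      using a a' Z by (simp add: beta_def)
    finally show ?thesis .
  qed
  have e2: "p2 (Ho Z) Z \<cdot> ?x \<cdot> alpha Z = p2 (Ho Z) Z \<cdot> beta Z a \<cdot> Km ?x"
  proof -
    have "p2 (Ho Z) Z \<cdot> ?x \<cdot> alpha Z = ?s \<cdot> phi Z \<cdot> Km (p2 (Ho (Mo Z)) (Mo Z))"
      using a a' Z by (simp add: alpha_def)
    also have "\<dots> = a \<cdot> Km ?s \<cdot> Km (p2 (Ho (Mo Z)) (Mo Z))"
      using a a' Z by simp
    also have "\<dots> = a \<cdot> Km (?s \<cdot> p2 (Ho (Mo Z)) (Mo Z))"
      using a a' Z by simp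
    also have "\<dots> = a \<cdot> Km (p2 (Ho Z) Z \<cdot> ?x)"
      using a a' Z by simp
    also have "\<dots> = a \<cdot> Km (p2 (Ho Z) Z) \<cdot> Km ?x"
      using a a' Z by (subst K_comp) auto
    also have "\<dots> = p2 (Ho Z) Z \<cdot> beta Z a \<cdot> Km ?x"
      using a a' Z by (simp add: beta_def)
    finally show ?thesis .
  qed
  have "?x \<cdot> alpha Z = beta Z a \<cdot> Km ?x"
    by (rule pair_eq[of "Ho Z" Z]) (use a Z e1 e2 in auto)
  then show ?thesis unfolding ahom_def using a a' Z by simp
qed

lemma lemL:
  assumes bi: "bialg Z a z"
  shows "z \<cdot> sh Z a = Hm (sh Z a) \<cdot> p1 (Ho (Mo Z)) (Mo Z) \<cdot> rho Z \<cdot> Mm (pair z (I Z))"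
proof -
  have a: "alg Z a" and z: "arr z" "dm z = Z" "cd z = Ho Z"
    and zeq: "z \<cdot> a = Hm (sh Z a) \<cdot> l Z \<cdot> Km (pair z (I Z))"
    using bi unfolding bialg_def by auto
  have Z: "obj Z" using alg_obj[OF a] .
  have a': "arr a" "dm a = Ko Z" "cd a = Z" using a unfolding alg_def by auto
  let ?s = "sh Z a"
  let ?h1 = "pair (z \<cdot> ?s) ?s"
  let ?h2 = "cross (Hm ?s) ?s \<cdot> rho Z \<cdot> Mm (pair z (I Z))"
  have h1h2: "?h1 = ?h2"
  proof (rule alg_eq[of Z "Q Z" "beta Z a"])
    have e1: "p1 (Ho Z) Z \<cdot> ?h1 \<cdot> phi Z = p1 (Ho Z) Z \<cdot> beta Z a \<cdot> Km ?h1"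
    proof -
      have "p1 (Ho Z) Z \<cdot> ?h1 \<cdot> phi Z = z \<cdot> ?s \<cdot> phi Z" using a a' z Z by simp
      also have "\<dots> = z \<cdot> a \<cdot> Km ?s" using a a' z Z by simp
      also have "\<dots> = (z \<cdot> a) \<cdot> Km ?s" using a a' z Z by (intro assoc[symmetric]) auto
      also have "\<dots> = (Hm ?s \<cdot> l Z \<cdot> Km (pair z (I Z))) \<cdot> Km ?s" using zeq by simp
      also have "\<dots> = Hm ?s \<cdot> l Z \<cdot> Km (pair z (I Z)) \<cdot> Km ?s" using a a' z Z by simp
      also have "\<dots> = Hm ?s \<cdot> l Z \<cdot> Km (pair z (I Z) \<cdot> ?s)" using a a' z Z by (subst K_comp) auto
      also have "\<dots> = Hm ?s \<cdot> l Z \<cdot> Km ?h1" using a a' z Z by simp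
      also have "\<dots> = p1 (Ho Z) Z \<cdot> beta Z a \<cdot> Km ?h1" using a a' z Z by (simp add: beta_def)
      finally show ?thesis .
    qed
    have e2: "p2 (Ho Z) Z \<cdot> ?h1 \<cdot> phi Z = p2 (Ho Z) Z \<cdot> beta Z a \<cdot> Km ?h1"
    proof -
      have "p2 (Ho Z) Z \<cdot> ?h1 \<cdot> phi Z = ?s \<cdot> phi Z" using a a' z Z by simp
      also have "\<dots> = a \<cdot> Km ?s" using a a' z Z by simp
      also have "\<dots> = a \<cdot> Km (p2 (Ho Z) Z \<cdot> ?h1)" using a a' z Z by simp
      also have "\<dots> = a \<cdot> Km (p2 (Ho Z) Z) \<cdot> Km ?h1" using a a' z Z by (subst K_comp) auto
      also have "\<dots> = p2 (Ho Z) Z \<cdot> beta Z a \<cdot> Km ?h1" using a a' z Z by (simp add: beta_def)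
      finally show ?thesis .
    qed
    have "?h1 \<cdot> phi Z = beta Z a \<cdot> Km ?h1"
      by (rule pair_eq[of "Ho Z" Z]) (use a a' z Z e1 e2 in auto)
    then show "ahom (Mo Z) (phi Z) (Q Z) (beta Z a) ?h1"
      unfolding ahom_def using a a' z Z by simp
    show "ahom (Mo Z) (phi Z) (Q Z) (beta Z a) ?h2"
    proof -
      have 1: "ahom (Mo Z) (phi Z) (Mo (Q Z)) (phi (Q Z)) (Mm (pair z (I Z)))"
        using a a' z Z by (intro ahom_M) auto
      have 2: "ahom (Mo Z) (phi Z) (Q (Mo Z)) (alpha Z) (rho Z \<cdot> Mm (pair z (I Z)))"
        using a a' z Z by (intro ahom_comp[OF 1 ahom_rho]) auto
      show ?thesis using a a' z Z by (intro ahom_comp[OF 2 cross_beta]) auto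
    qed
    have "?h1 \<cdot> eta Z = pair z (I Z)" using a a' z Z by simp
    moreover have "?h2 \<cdot> eta Z = pair z (I Z)"
    proof -
      have "?h2 \<cdot> eta Z = cross (Hm ?s) ?s \<cdot> rho Z \<cdot> eta (Q Z) \<cdot> pair z (I Z)"
        using a a' z Z by simp
      also have "\<dots> = cross (Hm ?s) ?s \<cdot> cross (Hm (eta Z)) (eta Z) \<cdot> pair z (I Z)"
        using a a' z Z by simp
      also have "\<dots> = pair z (I Z)"
        using a a' z Z by simp
      finally show ?thesis .
    qed
    ultimately show "?h1 \<cdot> eta Z = ?h2 \<cdot> eta Z" by simp
  qed (use Z a in auto)
  have "z \<cdot> ?s = p1 (Ho Z) Z \<cdot> ?h1" using a a' z Z by simp
  also have "\<dots> = p1 (Ho Z) Z \<cdot> ?h2" using h1h2 by simp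
  also have "\<dots> = Hm ?s \<cdot> p1 (Ho (Mo Z)) (Mo Z) \<cdot> rho Z \<cdot> Mm (pair z (I Z))" using a a' z Z by simp
  finally show ?thesis .
qed

end

context S begin

lemma bialg_C: "bialg C b c"
  unfolding bialg_def using interp_eq by simp

lemma lemL_C: "c \<cdot> sh C b = Hm (sh C b) \<cdot> p1 (Ho (Mo C)) (Mo C) \<cdot> rho C \<cdot> Mm (pair c (I C))"
  using lemL[OF bialg_C] .

lemma lemL_C':
  assumes k: "arr k" "cd k = Mo C"
  shows "c \<cdot> sh C b \<cdot> k = Hm (sh C b) \<cdot> p1 (Ho (Mo C)) (Mo C) \<cdot> rho C \<cdot> Mm (pair c (I C)) \<cdot> k"
proof -
  have "c \<cdot> sh C b \<cdot> k = (c \<cdot> sh C b) \<cdot> k" using k by simp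
  also have "\<dots> = (Hm (sh C b) \<cdot> p1 (Ho (Mo C)) (Mo C) \<cdot> rho C \<cdot> Mm (pair c (I C))) \<cdot> k"
    using lemL_C by simp
  also have "\<dots> = Hm (sh C b) \<cdot> p1 (Ho (Mo C)) (Mo C) \<cdot> rho C \<cdot> Mm (pair c (I C)) \<cdot> k"
    using k by simp
  finally show ?thesis .
qed

lemma c_shM:
  assumes V: "obj V" and u: "arr u" "dm u = W" "cd u = Q V"
    and g: "arr g" "dm g = V" "cd g = C"
    and k: "arr k" "dm k = W" "cd k = C"
    and ck: "pair (c \<cdot> k) k = cross (Hm g) g \<cdot> u"
  shows "c \<cdot> sh C b \<cdot> Mm k = Hm (sh C b \<cdot> Mm g) \<cdot> p1 (Ho (Mo V)) (Mo V) \<cdot> rho V \<cdot> Mm u"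
proof -
  have "c \<cdot> sh C b \<cdot> Mm k = Hm (sh C b) \<cdot> p1 (Ho (Mo C)) (Mo C) \<cdot> rho C \<cdot> Mm (pair c (I C)) \<cdot> Mm k"
    using k by (intro lemL_C') auto
  also have "Mm (pair c (I C)) \<cdot> Mm k = Mm (pair c (I C) \<cdot> k)"
    using k by (intro M_comp[symmetric]) auto
  also have "pair c (I C) \<cdot> k = pair (c \<cdot> k) k" using k by simp
  also have "\<dots> = cross (Hm g) g \<cdot> u" by (rule ck)
  also have "Mm (cross (Hm g) g \<cdot> u) = Mm (cross (Hm g) g) \<cdot> Mm (u)"
    using V u g by (intro M_comp) auto
  also have "rho C \<cdot> Mm (cross (Hm g) g) \<cdot> Mm (u) = (rho C \<cdot> Mm (cross (Hm g) g)) \<cdot> Mm (u)"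
    using V u g by simp
  also have "rho C \<cdot> Mm (cross (Hm g) g) = cross (Hm (Mm g)) (Mm g) \<cdot> rho V"
    using g by (intro rho_nat) auto
  also have "p1 (Ho (Mo C)) (Mo C) \<cdot> (cross (Hm (Mm g)) (Mm g) \<cdot> rho V) \<cdot> Mm (u)
       = Hm (Mm g) \<cdot> p1 (Ho (Mo V)) (Mo V) \<cdot> rho V \<cdot> Mm (u)"
    using V u g by simp
  also have "Hm (sh C b) \<cdot> Hm (Mm g) \<cdot> p1 (Ho (Mo V)) (Mo V) \<cdot> rho V \<cdot> Mm (u)
      = (Hm (sh C b) \<cdot> Hm (Mm g)) \<cdot> p1 (Ho (Mo V)) (Mo V) \<cdot> rho V \<cdot> Mm (u)"
    using V u g by (intro assoc[symmetric]) auto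
  also have "Hm (sh C b) \<cdot> Hm (Mm g) = Hm (sh C b \<cdot> Mm g)"
    using g by (intro H_comp[symmetric]) auto
  finally show ?thesis .
qed

lemma bialg_hom:
  assumes bi: "bialg Z a z" and g: "arr g" "dm g = Z" "cd g = C" and cg: "c \<cdot> g = Hm g \<cdot> z"
  shows "g \<cdot> a = b \<cdot> Km g"
proof -
  have a: "alg Z a" and z: "arr z" "dm z = Z" "cd z = Ho Z"
    using bi unfolding bialg_def by auto
  have Z: "obj Z" using alg_obj[OF a] .
  have a': "arr a" "dm a = Ko Z" "cd a = Z" using a unfolding alg_def by auto
  let ?s = "sh Z a"
  let ?w = "p1 (Ho (Mo Z)) (Mo Z) \<cdot> rho Z \<cdot> Mm (pair z (I Z))"
  have w: "arr ?w" "dm ?w = Mo Z" "cd ?w = Ho (Mo Z)" using Z z by auto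
  have L: "z \<cdot> ?s = Hm ?s \<cdot> ?w" using lemL[OF bi] .
  have gs: "g \<cdot> ?s = sh C b \<cdot> Mm g"
  proof (rule coalg_eq[OF _ w])
    have "c \<cdot> g \<cdot> ?s = (c \<cdot> g) \<cdot> ?s" using a g by simp
    also have "\<dots> = (Hm g \<cdot> z) \<cdot> ?s" using cg by simp
    also have "\<dots> = Hm g \<cdot> z \<cdot> ?s" using a g z by simp
    also have "\<dots> = Hm g \<cdot> Hm ?s \<cdot> ?w" using L by simp
    also have "\<dots> = (Hm g \<cdot> Hm ?s) \<cdot> ?w" using a g w by (intro assoc[symmetric]) auto
    also have "Hm g \<cdot> Hm ?s = Hm (g \<cdot> ?s)" using a g by (intro H_comp[symmetric]) auto
    finally show "c \<cdot> g \<cdot> ?s = Hm (g \<cdot> ?s) \<cdot> ?w" .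
    have "pair (c \<cdot> g) g = cross (Hm g) g \<cdot> pair z (I Z)" using cg g z Z by simp
    then show "c \<cdot> sh C b \<cdot> Mm g = Hm (sh C b \<cdot> Mm g) \<cdot> ?w"
      by (intro c_shM) (use Z z g in auto)
  qed (use Z a g in auto)
  have "g \<cdot> a = g \<cdot> ?s \<cdot> phi Z \<cdot> Km (eta Z)" using sh_recover[OF a] by simp
  also have "\<dots> = (g \<cdot> ?s) \<cdot> phi Z \<cdot> Km (eta Z)" using a g Z by (intro assoc[symmetric]) auto
  also have "\<dots> = (sh C b \<cdot> Mm g) \<cdot> phi Z \<cdot> Km (eta Z)" using gs by simp
  also have "\<dots> = b \<cdot> Km (sh C b) \<cdot> Km (Mm g) \<cdot> Km (eta Z)" using g Z by simp
  also have "Km (Mm g) \<cdot> Km (eta Z) = Km (Mm g \<cdot> eta Z)"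
    using g Z by (intro K_comp[symmetric]) auto
  also have "Km (sh C b) \<cdot> Km (Mm g \<cdot> eta Z) = Km (sh C b \<cdot> Mm g \<cdot> eta Z)"
    using g Z by (intro K_comp[symmetric]) auto
  also have "sh C b \<cdot> Mm g \<cdot> eta Z = g" using g Z by simp
  finally show ?thesis .
qed

definition zeta where
  "zeta Y xi = Hm (mu Y) \<cdot> p1 (Ho (Mo (Mo Y))) (Mo (Mo Y)) \<cdot> rho (Mo Y) \<cdot> Mm (pair xi (eta Y))"

lemma zeta_typ[simp]:
  assumes "obj Y" "arr xi" "dm xi = Y" "cd xi = Ho (Mo Y)"
  shows "arr (zeta Y xi)" "dm (zeta Y xi) = Mo Y" "cd (zeta Y xi) = Ho (Mo Y)"
  using assms unfolding zeta_def by auto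

lemma zeta_eta:
  assumes Y: "obj Y" and xi: "arr xi" "dm xi = Y" "cd xi = Ho (Mo Y)"
  shows "zeta Y xi \<cdot> eta Y = xi"
proof -
  have "zeta Y xi \<cdot> eta Y = Hm (mu Y) \<cdot> p1 (Ho (Mo (Mo Y))) (Mo (Mo Y)) \<cdot> rho (Mo Y) \<cdot> eta (Q (Mo Y)) \<cdot> pair xi (eta Y)"
    using Y xi unfolding zeta_def by simp
  also have "\<dots> = xi" using Y xi by simp
  finally show ?thesis .
qed

lemma bialg_free:
  assumes Y: "obj Y" and xi: "arr xi" "dm xi = Y" "cd xi = Ho (Mo Y)"
  shows "bialg (Mo Y) (phi Y) (zeta Y xi)"
proof -
  let ?u = "pair xi (eta Y)"
  let ?R = "rho (Mo Y) \<cdot> Mm ?u"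
  let ?p1 = "p1 (Ho (Mo (Mo Y))) (Mo (Mo Y))"
  let ?p2 = "p2 (Ho (Mo (Mo Y))) (Mo (Mo Y))"
  let ?A = "?p1 \<cdot> ?R"
  have u: "arr ?u" "dm ?u = Y" "cd ?u = Q (Mo Y)" using Y xi by auto
  have R: "arr ?R" "dm ?R = Mo Y" "cd ?R = Q (Mo (Mo Y))" using Y u by auto
  have Rh: "ahom (Mo Y) (phi Y) (Q (Mo (Mo Y))) (alpha (Mo Y)) ?R"
    using Y u by (intro ahom_comp[OF ahom_M ahom_rho]) auto
  have p2R: "?p2 \<cdot> ?R = Mm (eta Y)"
  proof -
    have "?p2 \<cdot> ?R = (?p2 \<cdot> rho (Mo Y)) \<cdot> Mm ?u" using Y u by simp
    also have "?p2 \<cdot> rho (Mo Y) = Mm (p2 (Ho (Mo Y)) (Mo Y))" using Y by (intro rho_p2) auto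
    also have "Mm (p2 (Ho (Mo Y)) (Mo Y)) \<cdot> Mm ?u = Mm (p2 (Ho (Mo Y)) (Mo Y) \<cdot> ?u)"
      using Y u by (intro M_comp[symmetric]) auto
    also have "p2 (Ho (Mo Y)) (Mo Y) \<cdot> ?u = eta Y" using Y xi by simp
    finally show ?thesis .
  qed
  have Rp: "?R = pair ?A (Mm (eta Y))"
    by (rule pair_unique) (use Y R p2R in auto)
  have zA: "zeta Y xi = Hm (mu Y) \<cdot> ?A" unfolding zeta_def using Y u by simp
  have A: "arr ?A" "dm ?A = Mo Y" "cd ?A = Ho (Mo (Mo Y))" using Y R by auto
  have lhs: "zeta Y xi \<cdot> phi Y = Hm (mu Y) \<cdot> Hm (mu (Mo Y)) \<cdot> l (Mo (Mo Y)) \<cdot> Km ?R"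
  proof -
    have "zeta Y xi \<cdot> phi Y = Hm (mu Y) \<cdot> ?p1 \<cdot> ?R \<cdot> phi Y" using zA Y R by simp
    also have "?R \<cdot> phi Y = alpha (Mo Y) \<cdot> Km ?R" using Rh unfolding ahom_def by simp
    also have "?p1 \<cdot> alpha (Mo Y) \<cdot> Km ?R = Hm (mu (Mo Y)) \<cdot> l (Mo (Mo Y)) \<cdot> Km ?R"
      using Y R by (simp add: alpha_def)
    finally show ?thesis .
  qed
  have pz: "pair (zeta Y xi) (I (Mo Y)) = cross (Hm (mu Y)) (mu Y) \<cdot> ?R"
  proof -
    have "cross (Hm (mu Y)) (mu Y) \<cdot> ?R = pair (Hm (mu Y) \<cdot> ?A) (mu Y \<cdot> Mm (eta Y))"
      using Y A by (subst Rp) simp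
    also have "\<dots> = pair (zeta Y xi) (I (Mo Y))" using zA Y by simp
    finally show ?thesis by simp
  qed
  have rhs: "Hm (mu Y) \<cdot> l (Mo Y) \<cdot> Km (pair (zeta Y xi) (I (Mo Y))) =
      Hm (mu Y) \<cdot> Hm (mu (Mo Y)) \<cdot> l (Mo (Mo Y)) \<cdot> Km ?R"
  proof -
    have "Km (pair (zeta Y xi) (I (Mo Y))) = Km (cross (Hm (mu Y)) (mu Y)) \<cdot> Km ?R"
      using pz Y R by simp
    then have "Hm (mu Y) \<cdot> l (Mo Y) \<cdot> Km (pair (zeta Y xi) (I (Mo Y))) =
        Hm (mu Y) \<cdot> (l (Mo Y) \<cdot> Km (cross (Hm (mu Y)) (mu Y))) \<cdot> Km ?R"
      using Y R by simp
    also have "l (Mo Y) \<cdot> Km (cross (Hm (mu Y)) (mu Y)) = Hm (Mm (mu Y)) \<cdot> l (Mo (Mo Y))"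
      using l_nat[of "mu Y"] Y by simp
    also have "Hm (mu Y) \<cdot> (Hm (Mm (mu Y)) \<cdot> l (Mo (Mo Y))) \<cdot> Km ?R =
        (Hm (mu Y) \<cdot> Hm (Mm (mu Y))) \<cdot> l (Mo (Mo Y)) \<cdot> Km ?R"
      using Y R by simp
    also have "Hm (mu Y) \<cdot> Hm (Mm (mu Y)) = Hm (mu Y \<cdot> Mm (mu Y))"
      using Y by (intro H_comp[symmetric]) auto
    also have "mu Y \<cdot> Mm (mu Y) = mu Y \<cdot> mu (Mo Y)" using mu_assoc Y by simp
    also have "Hm (mu Y \<cdot> mu (Mo Y)) = Hm (mu Y) \<cdot> Hm (mu (Mo Y))"
      using Y by (intro H_comp) auto
    finally show ?thesis using Y R by simp
  qed
  show ?thesis unfolding bialg_def using lhs rhs Y xi by simp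
qed

lemma main_loc:
  assumes X: "obj X" and e: "arr e" "dm e = X" "cd e = Mo (Ho (Mo X))"
  shows "\<exists>!d. hom \<A> d X C \<and>
           d = sh C b \<cdot> Mm ci \<cdot> Mm (Hm (sh C b)) \<cdot> Mm (Hm (Mm d)) \<cdot> e"
proof -
  define Y where "Y = Ho (Mo X)"
  have Y: "obj Y" using X unfolding Y_def by simp
  have e': "arr e" "dm e = X" "cd e = Mo Y" using e unfolding Y_def by auto
  define E where "E = mu Y \<cdot> Mm e"
  have E: "arr E" "dm E = Mo X" "cd E = Mo Y" using Y e' unfolding E_def by auto
  have Eh: "ahom (Mo X) (phi X) (Mo Y) (phi Y) E"
    unfolding E_def using Y e' by (intro ahom_comp[OF ahom_M ahom_mu]) auto
  have Eeta: "E \<cdot> eta X = e" unfolding E_def using X Y e' by simp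
  define xi where "xi = Hm E"
  have xi: "arr xi" "dm xi = Y" "cd xi = Ho (Mo Y)" using E unfolding xi_def Y_def by auto
  define z where "z = zeta Y xi"
  have z: "arr z" "dm z = Mo Y" "cd z = Ho (Mo Y)" unfolding z_def using Y xi by auto
  obtain g where g: "arr g" "dm g = Mo Y" "cd g = C" and cg: "c \<cdot> g = Hm g \<cdot> z"
    using coalg_ex[of "Mo Y" z] Y z by auto
  have gb: "g \<cdot> phi Y = b \<cdot> Km g"
    using bialg_hom[OF bialg_free[OF Y xi] g] cg unfolding z_def by simp
  have gh: "ahom (Mo Y) (phi Y) C b g" unfolding ahom_def using g gb by simp
  have gE: "g' \<cdot> E = sh C b \<cdot> Mm d'"
    if g'h: "ahom (Mo Y) (phi Y) C b g'" and d': "arr d'" "dm d' = X" "cd d' = C" and d'e: "g' \<cdot> e = d'" for g' d'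
  proof (rule alg_eq[of X C b])
    show "ahom (Mo X) (phi X) C b (g' \<cdot> E)" using Y X by (intro ahom_comp[OF Eh g'h]) auto
    show "ahom (Mo X) (phi X) C b (sh C b \<cdot> Mm d')" using d' X by (intro ahom_comp[OF ahom_M ahom_sh]) auto
    have g': "arr g'" "dm g' = Mo Y" "cd g' = C" using g'h unfolding ahom_def by auto
    have "(g' \<cdot> E) \<cdot> eta X = g' \<cdot> E \<cdot> eta X" using g' E X by simp
    also have "\<dots> = d'" using Eeta d'e by simp
    finally show "(g' \<cdot> E) \<cdot> eta X = (sh C b \<cdot> Mm d') \<cdot> eta X" using d' X by simp
  qed (use X in auto)
  define k where "k d' = ci \<cdot> Hm (sh C b) \<cdot> Hm (Mm d')" for d'
  have k: "arr (k d')" "dm (k d') = Y" "cd (k d') = C" if "arr d'" "dm d' = X" "cd d' = C" for d'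
    unfolding k_def Y_def using that by auto
  have rhs: "sh C b \<cdot> Mm ci \<cdot> Mm (Hm (sh C b)) \<cdot> Mm (Hm (Mm d')) \<cdot> e = (sh C b \<cdot> Mm (k d')) \<cdot> e"
    if "arr d'" "dm d' = X" "cd d' = C" for d'
    unfolding k_def using that e' unfolding Y_def by simp
  have kh: "ahom (Mo Y) (phi Y) C b (sh C b \<cdot> Mm (k d'))" if "arr d'" "dm d' = X" "cd d' = C" for d'
    using k[OF that] Y by (intro ahom_comp[OF ahom_M ahom_sh]) auto
  have ex: "g \<cdot> e = sh C b \<cdot> Mm ci \<cdot> Mm (Hm (sh C b)) \<cdot> Mm (Hm (Mm (g \<cdot> e))) \<cdot> e"
  proof -
    let ?d = "g \<cdot> e"
    have d: "arr ?d" "dm ?d = X" "cd ?d = C" using g e' by auto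
    have "g = sh C b \<cdot> Mm (k ?d)"
    proof (rule alg_eq[OF Y alg_b gh kh[OF d]])
      have "g \<cdot> eta Y = ci \<cdot> c \<cdot> g \<cdot> eta Y" using g Y by simp
      also have "c \<cdot> g \<cdot> eta Y = (c \<cdot> g) \<cdot> eta Y" using g Y by simp
      also have "\<dots> = Hm g \<cdot> z \<cdot> eta Y" using cg g z Y by simp
      also have "z \<cdot> eta Y = xi" unfolding z_def by (rule zeta_eta[OF Y xi])
      also have "Hm g \<cdot> xi = Hm (g \<cdot> E)" unfolding xi_def using g E by (intro H_comp[symmetric]) auto
      also have "g \<cdot> E = sh C b \<cdot> Mm ?d" using gE[OF gh d] by simp
      also have "ci \<cdot> Hm (sh C b \<cdot> Mm ?d) = k ?d" unfolding k_def using d by simp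
      also have "k ?d = (sh C b \<cdot> Mm (k ?d)) \<cdot> eta Y" using k[OF d] Y by simp
      finally show "g \<cdot> eta Y = (sh C b \<cdot> Mm (k ?d)) \<cdot> eta Y" .
    qed
    then show ?thesis using rhs[OF d] by simp
  qed
  have un: "d' = g \<cdot> e" if d': "arr d'" "dm d' = X" "cd d' = C"
    and sol: "d' = sh C b \<cdot> Mm ci \<cdot> Mm (Hm (sh C b)) \<cdot> Mm (Hm (Mm d')) \<cdot> e" for d'
  proof -
    let ?g = "sh C b \<cdot> Mm (k d')"
    have g': "arr ?g" "dm ?g = Mo Y" "cd ?g = C" using k[OF d'] by auto
    have d'e: "?g \<cdot> e = d'" using sol rhs[OF d'] by simp
    have g'E: "?g \<cdot> E = sh C b \<cdot> Mm d'" using gE[OF kh[OF d'] d' d'e] .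
    have ck: "pair (c \<cdot> k d') (k d') = cross (Hm ?g) ?g \<cdot> pair xi (eta Y)"
    proof -
      have "cross (Hm ?g) ?g \<cdot> pair xi (eta Y) = pair (Hm ?g \<cdot> xi) (?g \<cdot> eta Y)"
        using g' xi Y by (intro cross_pair) auto
      also have "Hm ?g \<cdot> xi = Hm (?g \<cdot> E)" unfolding xi_def using g' E by (intro H_comp[symmetric]) auto
      also have "?g \<cdot> E = sh C b \<cdot> Mm d'" by (rule g'E)
      also have "?g \<cdot> eta Y = k d'" using k[OF d'] Y by simp
      also have "Hm (sh C b \<cdot> Mm d') = c \<cdot> k d'" unfolding k_def using d' by simp
      finally show ?thesis by simp
    qed
    have "?g = g"
    proof (rule coalg_eq[of "Mo Y" z])
      have "c \<cdot> ?g = Hm (sh C b \<cdot> Mm ?g) \<cdot> p1 (Ho (Mo (Mo Y))) (Mo (Mo Y)) \<cdot> rho (Mo Y) \<cdot> Mm (pair xi (eta Y))"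
        by (rule c_shM[OF _ _ _ _ g' k[OF d'] ck]) (use Y xi in auto)
      also have "sh C b \<cdot> Mm ?g = ?g \<cdot> mu Y" using sh_M_ahom[OF Y alg_b kh[OF d']] .
      also have "Hm (?g \<cdot> mu Y) = Hm ?g \<cdot> Hm (mu Y)" using g' Y by (intro H_comp) auto
      also have "(Hm ?g \<cdot> Hm (mu Y)) \<cdot> p1 (Ho (Mo (Mo Y))) (Mo (Mo Y)) \<cdot> rho (Mo Y) \<cdot> Mm (pair xi (eta Y))
          = Hm ?g \<cdot> z" unfolding z_def zeta_def using g' Y xi by simp
      finally show "c \<cdot> ?g = Hm ?g \<cdot> z" .
    qed (use Y z g g' cg in auto)
    then show ?thesis using d'e by simp
  qed
  show ?thesis
  proof (rule ex1I[of _ "g \<cdot> e"])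
    show "hom \<A> (g \<cdot> e) X C \<and> g \<cdot> e = sh C b \<cdot> Mm ci \<cdot> Mm (Hm (sh C b)) \<cdot> Mm (Hm (Mm (g \<cdot> e))) \<cdot> e"
    proof (rule conjI[OF _ ex])
      show "hom \<A> (g \<cdot> e) X C" using g e' by (simp add: hom_iff)
    qed
  next
    fix d' assume "hom \<A> d' X C \<and> d' = sh C b \<cdot> Mm ci \<cdot> Mm (Hm (sh C b)) \<cdot> Mm (Hm (Mm d')) \<cdot> e"
    then show "d' = g \<cdot> e" using un unfolding hom_iff by blast
  qed
qed

end
theorem mainTheorem1:
  fixes \<A> :: "('o, 'm) category"
    and P :: "'o \<Rightarrow> 'o \<Rightarrow> 'o" and p1 p2 :: "'o \<Rightarrow> 'o \<Rightarrow> 'm"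
    and Ho Ko Mo :: "'o \<Rightarrow> 'o" and Hm Km :: "'m \<Rightarrow> 'm"
    and phi eta l :: "'o \<Rightarrow> 'm"
    and C :: 'o and c b :: 'm
    and X :: 'o and e :: 'm
  assumes cat: "is_category \<A>"
    and prods: "has_chosen_products \<A> P p1 p2"
    and coprods: "has_binary_coproducts \<A>"
    and H: "is_endofunctor \<A> Ho Hm"
    and K: "is_endofunctor \<A> Ko Km"
    and free: "has_free_algebras \<A> Ko Km Mo phi eta"
    and terminal: "is_terminal_coalg \<A> Ho Hm C c"
    and rule: "is_gsos_rule \<A> P p1 p2 Ho Hm Ko Km Mo phi eta l"
    and interp: "is_interpretation \<A> P p1 p2 Ho Hm Ko Km Mo phi eta l C c b"
    and X: "X \<in> Obj \<A>"
    and e: "hom \<A> e X (Mo (Ho (Mo X)))"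
  shows "\<exists>!d. hom \<A> d X C \<and>
           d = Comp \<A> (sharp \<A> Ko Km Mo phi eta C b)
                 (Comp \<A> (M_mor \<A> Ko Km Mo phi eta (inverse_mor \<A> c))
                   (Comp \<A> (M_mor \<A> Ko Km Mo phi eta (Hm (sharp \<A> Ko Km Mo phi eta C b)))
                     (Comp \<A> (M_mor \<A> Ko Km Mo phi eta (Hm (M_mor \<A> Ko Km Mo phi eta d)))
                       e)))"
proof -
  interpret S \<A> P p1 p2 Ho Ko Mo Hm Km phi eta l C c b
    using cat prods H K free terminal rule interp by unfold_locales
  show ?thesis
    using main_loc[of X e] X e unfolding hom_iff by blast
qed

end
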